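(* For each $\kappa\in[0,1]$, the problem (SMOP3) $$\min_{(g,h)}\ \tilde f_\kappa(g,h)=\kappa g+(1-\kappa)h\quad\text{subject to }(g,h)\in S,$$ where $$S=\Big\{(\hat g,\hat h)\in\mathbb R^2:\ \exists(\bar{\mathbf a},\mathbf s)\in\mathbb S \text{ with } \hat g=g(\bar{\mathbf a}),\ \hat h=h(\mathbf s),\ \text{and }\exists\,\mathbf z=(\mathbf z_1^\top,\dots,\mathbf z_{\mathcal I}^\top)^\top\in\mathbb D \text{ with } \bar{\mathbf a}=\tfrac1{\mathcal I}\textstyle\sum_{i=1}^{\mathcal I}\mathbf z_i\Big\},$$ has an optimal solution. For $\kappa\in(0,1)$ the optimal solution is unique.
   Context: Setting (a network of $\mathcal I\in\mathbb N$ residential energy systems with batteries). Fix an integer horizon $N\ge 2$, a time $k\in\mathbb N_0$, a step length $T>0$, and write $[m:n]=\{m,\dots,n\}$. For each $i\in[1:\mathcal I]$ the following are given: constants $\alpha_i,\beta_i,\gamma_i\in(0,1]$, a capacity $C_i\ge0$, bounds $\underline u_i<0<\bar u_i$, an initial state $x_i(k)\in[0,C_i]$, and data $w_i(n)\in\mathbb R$ for $n\in[k:k+N-1]$. Let $\mathbb U_i$ be the set of $(u^-,u^+)\in\mathbb R^2$ with $\underline u_i\le u^-\le0$, $0\le u^+\le\bar u_i$ and $0\le u^-/\underline u_i+u^+/\bar u_i\le1$. Let $\mathbb D_i\subset\mathbb R^N$ be the set of $\mathbf z_i=(z_i(k),\dots,z_i(k+N-1))^\top$ for which there exist $(u_i^-(n),u_i^+(n))\in\mathbb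 U_i$, $n\in[k:k+N-1]$, with $x_i(n+1)=\alpha_i x_i(n)+T(\beta_iu_i^+(n)+u_i^-(n))\in[0,C_i]$ and $z_i(n)=w_i(n)+u_i^+(n)+\gamma_iu_i^-(n)$ for all $n\in[k:k+N-1]$; let $\mathbb D=\mathbb D_1\times\dots\times\mathbb D_{\mathcal I}$. A reference vector $\bar\zeta\in\mathbb R^N$ and tube bounds $\underline{\mathbf c},\bar{\mathbf c}\in\mathbb R^N$ are given, and $$\mathbb S=\Big\{(\bar{\mathbf z},\mathbf s)\in\mathbb R^N\times\mathbb R^{2N}_{\ge0}:\ \begin{pmatrix}I\\-I\end{pmatrix}\bar{\mathbf z}-\mathbf s\le\begin{pmatrix}\bar{\mathbf c}\\-\underline{\mathbf c}\end{pmatrix}\Big\}.$$ The objective functions are $g(\bar{\mathbf z})=\frac1N\|\bar{\mathbf z}-\bar\zeta\|_2^2$ on $\mathbb R^N$ and $h(\mathbf s)=\|\mathbf s\|_2^2$ on $\mathbb R^{2N}_{\ge0}$. *)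

theory Defs
  imports Complex_Main
begin

text \<open>Vectors in R^N are functions nat => real, only the entries 0..N-1 being relevant;
 entry j corresponds to time k+j. Vectors in R^(2N) use entries 0..2N-1.\<close>

definition Uset :: "real \<Rightarrow> real \<Rightarrow> (real \<times> real) set" where
  "Uset ul uh = {(um, up). ul \<le> um \<and> um \<le> 0 \<and> 0 \<le> up \<and> up \<le> uh
      \<and> 0 \<le> um / ul + up / uh \<and> um / ul + up / uh \<le> 1}"

definition Dset :: "nat \<Rightarrow> real \<Rightarrow> real \<Rightarrow> real \<Rightarrow> real \<Rightarrow> real \<Rightarrow> real \<Rightarrow> real
      \<Rightarrow> real \<Rightarrow> (nat \<Rightarrow> real) \<Rightarrow> (nat \<Rightarrow> real) set" where
  "Dset N T \<alpha> \<beta> \<gamma> C ul uh x0 w = {z. \<exists>um up x :: nat \<Rightarrow> real. x 0 = x0 \<and>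
      (\<forall>j<N. (um j, up j) \<in> Uset ul uh
         \<and> x (Suc j) = \<alpha> * x j + T * (\<beta> * up j + um j)
         \<and> 0 \<le> x (Suc j) \<and> x (Suc j) \<le> C
         \<and> z j = w j + up j + \<gamma> * um j)}"

definition SSet :: "nat \<Rightarrow> (nat \<Rightarrow> real) \<Rightarrow> (nat \<Rightarrow> real) \<Rightarrow> ((nat \<Rightarrow> real) \<times> (nat \<Rightarrow> real)) set" where
  "SSet N cup clo = {(zb, s). (\<forall>j<2*N. 0 \<le> s j) \<and>
      (\<forall>j<N. zb j - s j \<le> cup j \<and> - zb j - s (N + j) \<le> - clo j)}"

definition gfun :: "nat \<Rightarrow> (nat \<Rightarrow> real) \<Rightarrow> (nat \<Rightarrow> real) \<Rightarrow> real" where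
  "gfun N zeta zb = (1 / real N) * (\<Sum>j<N. (zb j - zeta j)^2)"

definition hfun :: "nat \<Rightarrow> (nat \<Rightarrow> real) \<Rightarrow> real" where
  "hfun N s = (\<Sum>j<2*N. (s j)^2)"

definition Sfeas where
  "Sfeas II N T \<alpha> \<beta> \<gamma> C ul uh x0 w zeta cup clo =
     {(gh, hh). \<exists>ab s. (ab, s) \<in> SSet N cup clo \<and> gh = gfun N zeta ab \<and> hh = hfun N s \<and>
        (\<exists>z :: nat \<Rightarrow> nat \<Rightarrow> real.
           (\<forall>i\<in>{1..II}. z i \<in> Dset N T (\<alpha> i) (\<beta> i) (\<gamma> i) (C i) (ul i) (uh i) (x0 i) (w i)) \<and>
           (\<forall>j<N. ab j = (1 / real II) * (\<Sum>i=1..II. z i j)))}"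

end

theory Submission
  imports Defs "HOL-Analysis.Analysis"
begin

lemma compact_PiE_UNIV:
  fixes S :: "'a \<Rightarrow> 'b::topological_space set"
  assumes "\<And>i. compact (S i)"
  shows "compact (PiE UNIV S)"
proof -
  have "compactin (product_topology (\<lambda>i. euclidean) UNIV) (PiE UNIV S)"
    using assms by (simp add: compactin_PiE)
  then show ?thesis by (simp add: euclidean_product_topology)
qed

lemma continuous_on_coord:
  "continuous_on S f \<Longrightarrow> continuous_on S (\<lambda>x. f x i)"
  by (rule continuous_on_product_then_coordinatewise)

lemma closed_imp_const: "(c \<Longrightarrow> closed {x. Q x}) \<Longrightarrow> closed {x. c \<longrightarrow> Q x}"
  by (cases c) auto

lemma sum_2N: "(\<Sum>j<2*N. f j) = (\<Sum>j<N. f j) + (\<Sum>j<N. f (N + j)) " for f :: "nat \<Rightarrow> real"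
proof -
  have "(\<Sum>j<2*N. f j) = (\<Sum>j<N+N. f j)" by (simp add: mult_2)
  also have "\<dots> = (\<Sum>j<N. f j) + (\<Sum>j=N..<N+N. f j)"
    using sum.atLeastLessThan_concat[of 0 N "N+N" f] by (simp add: atLeast0LessThan)
  also have "(\<Sum>j=N..<N+N. f j) = (\<Sum>j=0+N..<N+N. f j)" by simp
  also have "\<dots> = (\<Sum>j=0..<N. f (j + N))" by (rule sum.shift_bounds_nat_ivl)
  also have "\<dots> = (\<Sum>j<N. f (N + j))" by (simp add: atLeast0LessThan add.commute)
  finally show ?thesis .
qed

definition Phi :: "nat \<Rightarrow> (nat\<Rightarrow>real) \<Rightarrow> (nat\<Rightarrow>real) \<Rightarrow> (nat\<Rightarrow>real) \<Rightarrow> real" where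
  "Phi N cup clo ab = (\<Sum>j<N. (max 0 (ab j - cup j))^2) + (\<Sum>j<N. (max 0 (clo j - ab j))^2)"

definition sopt :: "nat \<Rightarrow> (nat\<Rightarrow>real) \<Rightarrow> (nat\<Rightarrow>real) \<Rightarrow> (nat\<Rightarrow>real) \<Rightarrow> nat \<Rightarrow> real" where
  "sopt N cup clo ab = (\<lambda>j. if j < N then max 0 (ab j - cup j) else max 0 (clo (j - N) - ab (j - N)))"

lemma sopt_in: "(ab, sopt N cup clo ab) \<in> SSet N cup clo"
  unfolding SSet_def sopt_def by auto

lemma hfun_sopt: "hfun N (sopt N cup clo ab) = Phi N cup clo ab"
  unfolding hfun_def Phi_def sopt_def sum_2N by simp

lemma Phi_le: assumes "(ab, s) \<in> SSet N cup clo" shows "Phi N cup clo ab \<le> hfun N s"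
proof -
  have "(\<Sum>j<N. (max 0 (ab j - cup j))^2) \<le> (\<Sum>j<N. (s j)^2)"
  proof (rule sum_mono)
    fix j assume "j \<in> {..<N}"
    then have "0 \<le> s j" "ab j - s j \<le> cup j" using assms unfolding SSet_def by auto
    then show "(max 0 (ab j - cup j))^2 \<le> (s j)^2" by (intro power_mono) auto
  qed
  moreover have "(\<Sum>j<N. (max 0 (clo j - ab j))^2) \<le> (\<Sum>j<N. (s (N + j))^2)"
  proof (rule sum_mono)
    fix j assume "j \<in> {..<N}"
    then have "0 \<le> s (N + j)" "- ab j - s (N + j) \<le> - clo j" using assms unfolding SSet_def by auto
    then show "(max 0 (clo j - ab j))^2 \<le> (s (N + j))^2" by (intro power_mono) auto
  qed
  ultimately show ?thesis unfolding Phi_def hfun_def sum_2N by simp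
qed

lemma gfun_cong: "(\<And>j. j < N \<Longrightarrow> a j = b j) \<Longrightarrow> gfun N zeta a = gfun N zeta b"
  unfolding gfun_def by simp

lemma Phi_cong: "(\<And>j. j < N \<Longrightarrow> a j = b j) \<Longrightarrow> Phi N cup clo a = Phi N cup clo b"
  unfolding Phi_def by simp

lemma hfun_cong: "(\<And>j. j < 2*N \<Longrightarrow> a j = b j) \<Longrightarrow> hfun N a = hfun N b"
  unfolding hfun_def by simp

lemma sq_mid_sum:
  fixes a b c :: "nat \<Rightarrow> real"
  shows "(\<Sum>j\<in>A. ((a j + b j)/2 - c j)^2) =
     ((\<Sum>j\<in>A. (a j - c j)^2) + (\<Sum>j\<in>A. (b j - c j)^2))/2 - (\<Sum>j\<in>A. (a j - b j)^2)/4"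
proof -
  have "\<And>j. ((a j + b j)/2 - c j)^2 = (a j - c j)^2/2 + (b j - c j)^2/2 - (a j - b j)^2/4"
    by (simp add: power2_eq_square field_simps)
  then show ?thesis
    by (simp add: sum_subtractf sum.distrib flip: sum_divide_distrib)
qed

lemma Dset_mid:
  assumes "z1 \<in> Dset N T a b g C ul uh x0 w" "z2 \<in> Dset N T a b g C ul uh x0 w"
  shows "(\<lambda>j. (z1 j + z2 j)/2) \<in> Dset N T a b g C ul uh x0 w"
proof -
  obtain um1 up1 x1 where h1: "x1 0 = x0" "\<forall>j<N. (um1 j, up1 j) \<in> Uset ul uh
         \<and> x1 (Suc j) = a * x1 j + T * (b * up1 j + um1 j)
         \<and> 0 \<le> x1 (Suc j) \<and> x1 (Suc j) \<le> C
         \<and> z1 j = w j + up1 j + g * um1 j" using assms(1) unfolding Dset_def by blast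
  obtain um2 up2 x2 where h2: "x2 0 = x0" "\<forall>j<N. (um2 j, up2 j) \<in> Uset ul uh
         \<and> x2 (Suc j) = a * x2 j + T * (b * up2 j + um2 j)
         \<and> 0 \<le> x2 (Suc j) \<and> x2 (Suc j) \<le> C
         \<and> z2 j = w j + up2 j + g * um2 j" using assms(2) unfolding Dset_def by blast
  show ?thesis unfolding Dset_def
  proof (intro CollectI exI conjI allI impI)
    show "(\<lambda>j. (x1 j + x2 j)/2) 0 = x0" using h1 h2 by simp
    fix j assume j: "j < N"
    have u1: "(um1 j, up1 j) \<in> Uset ul uh" and u2: "(um2 j, up2 j) \<in> Uset ul uh"
      using h1 h2 j by auto
    have e: "((um1 j + um2 j)/2) / ul + ((up1 j + up2 j)/2) / uh
       = ((um1 j / ul + up1 j / uh) + (um2 j / ul + up2 j / uh))/2"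
      by (simp add: add_divide_distrib)
    show "((\<lambda>j. (um1 j + um2 j)/2) j, (\<lambda>j. (up1 j + up2 j)/2) j) \<in> Uset ul uh"
      using u1 u2 unfolding Uset_def mem_Collect_eq case_prod_conv e by auto
    show "(\<lambda>j. (x1 j + x2 j)/2) (Suc j) = a * (\<lambda>j. (x1 j + x2 j)/2) j + T * (b * (\<lambda>j. (up1 j + up2 j)/2) j + (\<lambda>j. (um1 j + um2 j)/2) j)"
      using h1 h2 j by (simp add: field_simps)
    have xb: "0 \<le> x1 (Suc j)" "x1 (Suc j) \<le> C" "0 \<le> x2 (Suc j)" "x2 (Suc j) \<le> C"
      using h1(2) h2(2) j by blast+
    show "0 \<le> (\<lambda>j. (x1 j + x2 j)/2) (Suc j)" using xb by simp
    show "(\<lambda>j. (x1 j + x2 j)/2) (Suc j) \<le> C" using xb by simp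
    show "(\<lambda>j. (z1 j + z2 j)/2) j = w j + (\<lambda>j. (up1 j + up2 j)/2) j + g * (\<lambda>j. (um1 j + um2 j)/2) j"
      using h1 h2 j by (simp add: field_simps)
  qed
qed


lemma c1: "continuous_on UNIV (\<lambda>p::(nat \<Rightarrow> nat \<Rightarrow> real) \<times> (nat \<Rightarrow> nat \<Rightarrow> real) \<times> (nat \<Rightarrow> nat \<Rightarrow> real). fst p i j)"
  by (rule continuous_on_coord, rule continuous_on_coord, rule continuous_on_fst, rule continuous_on_id)
lemma c2: "continuous_on UNIV (\<lambda>p::(nat \<Rightarrow> nat \<Rightarrow> real) \<times> (nat \<Rightarrow> nat \<Rightarrow> real) \<times> (nat \<Rightarrow> nat \<Rightarrow> real). fst (snd p) i j)"
  by (rule continuous_on_coord, rule continuous_on_coord, rule continuous_on_fst, rule continuous_on_snd, rule continuous_on_id)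
lemma c3: "continuous_on UNIV (\<lambda>p::(nat \<Rightarrow> nat \<Rightarrow> real) \<times> (nat \<Rightarrow> nat \<Rightarrow> real) \<times> (nat \<Rightarrow> nat \<Rightarrow> real). snd (snd p) i j)"
  by (rule continuous_on_coord, rule continuous_on_coord, rule continuous_on_snd, rule continuous_on_snd, rule continuous_on_id)

lemma PiE2_mem: "f \<in> PiE UNIV (\<lambda>i. PiE UNIV (\<lambda>j. S i j)) \<Longrightarrow> f i j \<in> S i j"
  by (simp add: PiE_iff)

lemma existence:
  fixes II N :: nat and T \<kappa> :: real
    and \<alpha> \<beta> \<gamma> C ul uh x0 :: "nat \<Rightarrow> real"
    and w :: "nat \<Rightarrow> nat \<Rightarrow> real"
    and zeta cup clo :: "nat \<Rightarrow> real"
  assumes A\<alpha>: "\<forall>i\<in>{1..II}. 0 < \<alpha> i \<and> \<alpha> i \<le> 1"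
    and AC: "\<forall>i\<in>{1..II}. C i \<ge> 0 \<and> ul i < 0 \<and> 0 < uh i \<and> 0 \<le> x0 i \<and> x0 i \<le> C i"
    and k0: "0 \<le> \<kappa>" and k1: "\<kappa> \<le> 1"
  shows "\<exists>p \<in> Sfeas II N T \<alpha> \<beta> \<gamma> C ul uh x0 w zeta cup clo.
            \<forall>q \<in> Sfeas II N T \<alpha> \<beta> \<gamma> C ul uh x0 w zeta cup clo.
              \<kappa> * fst p + (1 - \<kappa>) * snd p \<le> \<kappa> * fst q + (1 - \<kappa>) * snd q"
proof -
  define I where "I = {1..II}"
  define Bum :: "(nat \<Rightarrow> nat \<Rightarrow> real) set" where
    "Bum = PiE UNIV (\<lambda>i. PiE UNIV (\<lambda>j. if i \<in> I \<and> j < N then {ul i..0} else {0}))"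
  define Bup :: "(nat \<Rightarrow> nat \<Rightarrow> real) set" where
    "Bup = PiE UNIV (\<lambda>i. PiE UNIV (\<lambda>j. if i \<in> I \<and> j < N then {0..uh i} else {0}))"
  define Bx :: "(nat \<Rightarrow> nat \<Rightarrow> real) set" where
    "Bx = PiE UNIV (\<lambda>i. PiE UNIV (\<lambda>j. if i \<in> I \<and> j \<le> N then {0..C i} else {0}))"
  define L :: "((nat \<Rightarrow> nat \<Rightarrow> real) \<times> (nat \<Rightarrow> nat \<Rightarrow> real) \<times> (nat \<Rightarrow> nat \<Rightarrow> real)) set" where
    "L = {p. \<forall>i. i \<in> I \<longrightarrow> (snd (snd p) i 0 = x0 i \<and> (\<forall>j. j < N \<longrightarrow>
        (0 \<le> fst p i j / ul i + fst (snd p) i j / uh i \<and> fst p i j / ul i + fst (snd p) i j / uh i \<le> 1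
         \<and> snd (snd p) i (Suc j) = \<alpha> i * snd (snd p) i j + T * (\<beta> i * fst (snd p) i j + fst p i j))))}"
  define K where "K = (Bum \<times> Bup \<times> Bx) \<inter> L"
  have cB: "compact Bum" "compact Bup" "compact Bx"
    unfolding Bum_def Bup_def Bx_def
    by (intro compact_PiE_UNIV; simp add: compact_Icc)+
  have cL: "closed L"
    unfolding L_def divide_inverse
    by (intro closed_Collect_all closed_imp_const closed_Collect_conj closed_Collect_eq closed_Collect_le continuous_intros c1 c2 c3)
  have cK: "compact K" unfolding K_def
    by (intro compact_Int_closed compact_Times cB cL)
  define abv where "abv p j = 1 / real II * (\<Sum>i\<in>I. w i j + fst (snd p) i j + \<gamma> i * fst p i j)"
    for p :: "(nat \<Rightarrow> nat \<Rightarrow> real) \<times> (nat \<Rightarrow> nat \<Rightarrow> real) \<times> (nat \<Rightarrow> nat \<Rightarrow> real)" and j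
  define F where "F p = \<kappa> * gfun N zeta (abv p) + (1 - \<kappa>) * Phi N cup clo (abv p)" for p
  have contF: "continuous_on UNIV F"
    unfolding F_def gfun_def Phi_def abv_def by (intro continuous_intros c1 c2 c3)
  define p0 :: "(nat \<Rightarrow> nat \<Rightarrow> real) \<times> (nat \<Rightarrow> nat \<Rightarrow> real) \<times> (nat \<Rightarrow> nat \<Rightarrow> real)" where
    "p0 = (\<lambda>i j. 0, \<lambda>i j. 0, \<lambda>i j. if i \<in> I \<and> j \<le> N then \<alpha> i ^ j * x0 i else 0)"
  have "p0 \<in> K"
  proof -
    have "\<alpha> i ^ j * x0 i \<le> C i" "0 \<le> \<alpha> i ^ j * x0 i" if "i \<in> I" for i j
    proof -
      have a: "0 < \<alpha> i" "\<alpha> i \<le> 1" "0 \<le> x0 i" "x0 i \<le> C i" using A\<alpha> AC that I_def by auto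
      then have "\<alpha> i ^ j \<le> 1" by (simp add: power_le_one)
      then have "\<alpha> i ^ j * x0 i \<le> 1 * x0 i" using a by (intro mult_right_mono) auto
      then show "\<alpha> i ^ j * x0 i \<le> C i" using a by simp
      show "0 \<le> \<alpha> i ^ j * x0 i" using a by simp
    qed
    note bnd = this
    have "fst p0 \<in> Bum" unfolding p0_def Bum_def using AC I_def by (auto simp add: PiE_iff less_imp_le)
    moreover have "fst (snd p0) \<in> Bup" unfolding p0_def Bup_def using AC I_def by (auto simp add: PiE_iff less_imp_le)
    moreover have "snd (snd p0) \<in> Bx" unfolding p0_def Bx_def using bnd by (simp add: PiE_iff)
    moreover have "p0 \<in> L" unfolding L_def p0_def by simp
    ultimately show ?thesis unfolding K_def by (simp add: mem_Times_iff)
  qed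
  then have "K \<noteq> {}" by auto
  then obtain ps where ps: "ps \<in> K" and psmin: "\<forall>p\<in>K. F ps \<le> F p"
    using continuous_attains_inf[OF cK _ continuous_on_subset[OF contF]] by blast
  define abs where "abs = abv ps"
  define Pst where "Pst = (gfun N zeta abs, hfun N (sopt N cup clo abs))"
  have valP: "\<kappa> * fst Pst + (1 - \<kappa>) * snd Pst = F ps"
    unfolding Pst_def F_def abs_def by (simp add: hfun_sopt)
  have psK: "ps \<in> Bum \<times> Bup \<times> Bx" "ps \<in> L" using ps K_def by auto
  have "Pst \<in> Sfeas II N T \<alpha> \<beta> \<gamma> C ul uh x0 w zeta cup clo"
    unfolding Sfeas_def Pst_def
  proof (intro CollectI case_prodI exI conjI ballI allI impI)
    show "(abs, sopt N cup clo abs) \<in> SSet N cup clo" by (rule sopt_in)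
    fix i assume i: "i \<in> {1..II}"
    show "(\<lambda>i j. w i j + fst (snd ps) i j + \<gamma> i * fst ps i j) i \<in> Dset N T (\<alpha> i) (\<beta> i) (\<gamma> i) (C i) (ul i) (uh i) (x0 i) (w i)"
      unfolding Dset_def
    proof (intro CollectI exI conjI allI impI)
      show "snd (snd ps) i 0 = x0 i" using psK(2) i I_def L_def by auto
      fix j assume j: "j < N"
      have "fst ps \<in> Bum" "fst (snd ps) \<in> Bup" "snd (snd ps) \<in> Bx" using psK(1) by auto
      then have "fst ps i j \<in> {ul i..0}" "fst (snd ps) i j \<in> {0..uh i}"
        using i j I_def unfolding Bum_def Bup_def by (auto dest!: PiE2_mem[where i=i and j=j])
      moreover have "0 \<le> fst ps i j / ul i + fst (snd ps) i j / uh i \<and> fst ps i j / ul i + fst (snd ps) i j / uh i \<le> 1"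
        using psK(2) i j I_def unfolding L_def by auto
      ultimately show "(fst ps i j, fst (snd ps) i j) \<in> Uset (ul i) (uh i)"
        unfolding Uset_def by auto
      show "snd (snd ps) i (Suc j) = \<alpha> i * snd (snd ps) i j + T * (\<beta> i * fst (snd ps) i j + fst ps i j)"
        using psK(2) i j I_def L_def by auto
      have "snd (snd ps) \<in> Bx" using psK(1) by auto
      then have "snd (snd ps) i (Suc j) \<in> {0..C i}" using i j I_def unfolding Bx_def
        by (auto dest!: PiE2_mem[where i=i and j="Suc j"])
      then show "0 \<le> snd (snd ps) i (Suc j)" "snd (snd ps) i (Suc j) \<le> C i" by auto
    qed simp
  next
    fix j assume "j < N"
    show "abs j = 1 / real II * (\<Sum>i = 1..II. (\<lambda>i j. w i j + fst (snd ps) i j + \<gamma> i * fst ps i j) i j)"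
      unfolding abs_def abv_def I_def by simp
  qed simp_all
  moreover have "\<forall>q \<in> Sfeas II N T \<alpha> \<beta> \<gamma> C ul uh x0 w zeta cup clo.
              \<kappa> * fst Pst + (1 - \<kappa>) * snd Pst \<le> \<kappa> * fst q + (1 - \<kappa>) * snd q"
  proof
    fix q assume "q \<in> Sfeas II N T \<alpha> \<beta> \<gamma> C ul uh x0 w zeta cup clo"
    then obtain ab s z where q: "q = (gfun N zeta ab, hfun N s)" and abs: "(ab, s) \<in> SSet N cup clo"
      and zD: "\<forall>i\<in>{1..II}. z i \<in> Dset N T (\<alpha> i) (\<beta> i) (\<gamma> i) (C i) (ul i) (uh i) (x0 i) (w i)"
      and zab: "\<forall>j<N. ab j = (1 / real II) * (\<Sum>i=1..II. z i j)"
      unfolding Sfeas_def by blast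
    have "\<forall>i\<in>I. \<exists>t :: (nat \<Rightarrow> real) \<times> (nat \<Rightarrow> real) \<times> (nat \<Rightarrow> real). snd (snd t) 0 = x0 i \<and>
      (\<forall>j<N. (fst t j, fst (snd t) j) \<in> Uset (ul i) (uh i)
         \<and> snd (snd t) (Suc j) = \<alpha> i * snd (snd t) j + T * (\<beta> i * fst (snd t) j + fst t j)
         \<and> 0 \<le> snd (snd t) (Suc j) \<and> snd (snd t) (Suc j) \<le> C i
         \<and> z i j = w i j + fst (snd t) j + \<gamma> i * fst t j)"
    proof
      fix i assume "i \<in> I"
      then obtain um up x where "x 0 = x0 i \<and>
      (\<forall>j<N. (um j, up j) \<in> Uset (ul i) (uh i)
         \<and> x (Suc j) = \<alpha> i * x j + T * (\<beta> i * up j + um j)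
         \<and> 0 \<le> x (Suc j) \<and> x (Suc j) \<le> C i
         \<and> z i j = w i j + up j + \<gamma> i * um j)" using zD I_def unfolding Dset_def by blast
      then show "\<exists>t :: (nat \<Rightarrow> real) \<times> (nat \<Rightarrow> real) \<times> (nat \<Rightarrow> real). snd (snd t) 0 = x0 i \<and>
      (\<forall>j<N. (fst t j, fst (snd t) j) \<in> Uset (ul i) (uh i)
         \<and> snd (snd t) (Suc j) = \<alpha> i * snd (snd t) j + T * (\<beta> i * fst (snd t) j + fst t j)
         \<and> 0 \<le> snd (snd t) (Suc j) \<and> snd (snd t) (Suc j) \<le> C i
         \<and> z i j = w i j + fst (snd t) j + \<gamma> i * fst t j)"
        by (intro exI[of _ "(um, up, x)"]) (simp only: fst_conv snd_conv, blast)
    qed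
    then obtain tt where tt: "\<forall>i\<in>I. snd (snd (tt i)) 0 = x0 i \<and>
      (\<forall>j<N. (fst (tt i) j, fst (snd (tt i)) j) \<in> Uset (ul i) (uh i)
         \<and> snd (snd (tt i)) (Suc j) = \<alpha> i * snd (snd (tt i)) j + T * (\<beta> i * fst (snd (tt i)) j + fst (tt i) j)
         \<and> 0 \<le> snd (snd (tt i)) (Suc j) \<and> snd (snd (tt i)) (Suc j) \<le> C i
         \<and> z i j = w i j + fst (snd (tt i)) j + \<gamma> i * fst (tt i) j)"
      by (rule bchoice[THEN exE]) blast
    define pq :: "(nat \<Rightarrow> nat \<Rightarrow> real) \<times> (nat \<Rightarrow> nat \<Rightarrow> real) \<times> (nat \<Rightarrow> nat \<Rightarrow> real)" where
      "pq = (\<lambda>i j. if i \<in> I \<and> j < N then fst (tt i) j else 0,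
             \<lambda>i j. if i \<in> I \<and> j < N then fst (snd (tt i)) j else 0,
             \<lambda>i j. if i \<in> I \<and> j \<le> N then snd (snd (tt i)) j else 0)"
    have "pq \<in> Bum \<times> Bup \<times> Bx"
    proof -
      have "fst (tt i) j \<in> {ul i..0} \<and> fst (snd (tt i)) j \<in> {0..uh i}" if "i \<in> I" "j < N" for i j
        using tt that unfolding Uset_def by auto
      moreover have "snd (snd (tt i)) j \<in> {0..C i}" if "i \<in> I" "j \<le> N" for i j
      proof (cases j)
        case 0 then show ?thesis using tt that AC I_def by auto
      next
        case (Suc j')
        have "j' < N" using that Suc by simp
        then have "0 \<le> snd (snd (tt i)) (Suc j') \<and> snd (snd (tt i)) (Suc j') \<le> C i"
          using tt that(1) by blast
        then show ?thesis by (simp only: Suc atLeastAtMost_iff)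
      qed
      ultimately show ?thesis unfolding pq_def Bum_def Bup_def Bx_def by auto
    qed
    moreover have "pq \<in> L" unfolding L_def
    proof (intro CollectI allI impI conjI)
      fix i assume i: "i \<in> I"
      show "snd (snd pq) i 0 = x0 i" using tt i by (simp add: pq_def)
      fix j assume j: "j < N"
      have u: "(fst (tt i) j, fst (snd (tt i)) j) \<in> Uset (ul i) (uh i)"
        and r: "snd (snd (tt i)) (Suc j) = \<alpha> i * snd (snd (tt i)) j + T * (\<beta> i * fst (snd (tt i)) j + fst (tt i) j)"
        using tt i j by blast+
      show "0 \<le> fst pq i j / ul i + fst (snd pq) i j / uh i" using u i j by (simp add: pq_def Uset_def)
      show "fst pq i j / ul i + fst (snd pq) i j / uh i \<le> 1" using u i j by (simp add: pq_def Uset_def)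
      show "snd (snd pq) i (Suc j) = \<alpha> i * snd (snd pq) i j + T * (\<beta> i * fst (snd pq) i j + fst pq i j)"
        using r i j by (simp add: pq_def)
    qed
    ultimately have "pq \<in> K" unfolding K_def by auto
    then have "F ps \<le> F pq" using psmin by auto
    moreover have "abv pq j = ab j" if "j < N" for j
    proof -
      have "abv pq j = 1 / real II * (\<Sum>i\<in>I. z i j)"
        unfolding abv_def pq_def using tt that by (intro arg_cong[where f="\<lambda>x. 1 / real II * x"] sum.cong) auto
      then show ?thesis using zab that I_def by simp
    qed
    then have "F pq = \<kappa> * gfun N zeta ab + (1 - \<kappa>) * Phi N cup clo ab"
      unfolding F_def by (metis gfun_cong Phi_cong)
    moreover have "(1 - \<kappa>) * Phi N cup clo ab \<le> (1 - \<kappa>) * hfun N s"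
      using Phi_le[OF abs] k1 by (intro mult_left_mono) auto
    ultimately show "\<kappa> * fst Pst + (1 - \<kappa>) * snd Pst \<le> \<kappa> * fst q + (1 - \<kappa>) * snd q"
      unfolding valP q by simp
  qed
  ultimately show ?thesis by blast
qed


lemma aux_lin:
  fixes a b c d :: real
  assumes "a = (b + c) / 2 - d" "b \<le> a" "b \<le> c" "c \<le> b"
  shows "d \<le> 0"
  using assms by argo

lemma uniqueness:
  fixes II N :: nat and T \<kappa> :: real
    and \<alpha> \<beta> \<gamma> C ul uh x0 :: "nat \<Rightarrow> real"
    and w :: "nat \<Rightarrow> nat \<Rightarrow> real"
    and zeta cup clo :: "nat \<Rightarrow> real"
  assumes N1: "N \<ge> 1" and k0: "0 < \<kappa>" and k1: "\<kappa> < 1"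
    and p1: "p1 \<in> Sfeas II N T \<alpha> \<beta> \<gamma> C ul uh x0 w zeta cup clo"
    and p2: "p2 \<in> Sfeas II N T \<alpha> \<beta> \<gamma> C ul uh x0 w zeta cup clo"
    and o1: "\<forall>q \<in> Sfeas II N T \<alpha> \<beta> \<gamma> C ul uh x0 w zeta cup clo.
                 \<kappa> * fst p1 + (1 - \<kappa>) * snd p1 \<le> \<kappa> * fst q + (1 - \<kappa>) * snd q"
    and o2: "\<forall>q \<in> Sfeas II N T \<alpha> \<beta> \<gamma> C ul uh x0 w zeta cup clo.
                 \<kappa> * fst p2 + (1 - \<kappa>) * snd p2 \<le> \<kappa> * fst q + (1 - \<kappa>) * snd q"
  shows "p1 = p2"
proof -
  obtain ab1 s1 z1 where q1: "p1 = (gfun N zeta ab1, hfun N s1)" and S1: "(ab1, s1) \<in> SSet N cup clo"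
      and D1: "\<forall>i\<in>{1..II}. z1 i \<in> Dset N T (\<alpha> i) (\<beta> i) (\<gamma> i) (C i) (ul i) (uh i) (x0 i) (w i)"
      and A1: "\<forall>j<N. ab1 j = (1 / real II) * (\<Sum>i=1..II. z1 i j)"
    using p1 unfolding Sfeas_def by blast
  obtain ab2 s2 z2 where q2: "p2 = (gfun N zeta ab2, hfun N s2)" and S2: "(ab2, s2) \<in> SSet N cup clo"
      and D2: "\<forall>i\<in>{1..II}. z2 i \<in> Dset N T (\<alpha> i) (\<beta> i) (\<gamma> i) (C i) (ul i) (uh i) (x0 i) (w i)"
      and A2: "\<forall>j<N. ab2 j = (1 / real II) * (\<Sum>i=1..II. z2 i j)"
    using p2 unfolding Sfeas_def by blast
  define ab where "ab = (\<lambda>j. (ab1 j + ab2 j) / 2)"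
  define s where "s = (\<lambda>j. (s1 j + s2 j) / 2)"
  define z where "z = (\<lambda>i j. (z1 i j + z2 i j) / 2)"
  have Sm: "(ab, s) \<in> SSet N cup clo"
    unfolding SSet_def ab_def s_def
  proof (intro CollectI case_prodI conjI allI impI)
    fix j assume j: "j < 2 * N"
    then show "0 \<le> (s1 j + s2 j) / 2" using S1 S2 unfolding SSet_def by auto
  next
    fix j assume j: "j < N"
    have "ab1 j - s1 j \<le> cup j" "ab2 j - s2 j \<le> cup j"
      "- ab1 j - s1 (N + j) \<le> - clo j" "- ab2 j - s2 (N + j) \<le> - clo j"
      using S1 S2 j unfolding SSet_def by auto
    then show "(ab1 j + ab2 j) / 2 - (s1 j + s2 j) / 2 \<le> cup j"
      "- ((ab1 j + ab2 j) / 2) - (s1 (N + j) + s2 (N + j)) / 2 \<le> - clo j"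
      by (simp_all add: field_simps)
  qed
  have Dm: "\<forall>i\<in>{1..II}. z i \<in> Dset N T (\<alpha> i) (\<beta> i) (\<gamma> i) (C i) (ul i) (uh i) (x0 i) (w i)"
    using D1 D2 unfolding z_def by (simp add: Dset_mid)
  have Am: "\<forall>j<N. ab j = (1 / real II) * (\<Sum>i=1..II. z i j)"
  proof (intro allI impI)
    fix j assume j: "j < N"
    have e: "(\<Sum>i=1..II. z i j) = ((\<Sum>i=1..II. z1 i j) + (\<Sum>i=1..II. z2 i j)) / 2"
      unfolding z_def by (simp add: sum.distrib flip: sum_divide_distrib)
    show "ab j = 1 / real II * (\<Sum>i=1..II. z i j)"
      unfolding ab_def e A1[rule_format, OF j] A2[rule_format, OF j]
      by (simp add: ring_distribs add_divide_distrib)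
  qed
  have "(gfun N zeta ab, hfun N s) \<in> Sfeas II N T \<alpha> \<beta> \<gamma> C ul uh x0 w zeta cup clo"
    unfolding Sfeas_def using Sm Dm Am by blast
  then have le: "\<kappa> * gfun N zeta ab1 + (1 - \<kappa>) * hfun N s1 \<le> \<kappa> * gfun N zeta ab + (1 - \<kappa>) * hfun N s"
    using o1 q1 by fastforce
  have le12: "\<kappa> * gfun N zeta ab1 + (1 - \<kappa>) * hfun N s1 \<le> \<kappa> * gfun N zeta ab2 + (1 - \<kappa>) * hfun N s2"
    using o1 p2 q1 q2 by fastforce
  have le21: "\<kappa> * gfun N zeta ab2 + (1 - \<kappa>) * hfun N s2 \<le> \<kappa> * gfun N zeta ab1 + (1 - \<kappa>) * hfun N s1"
    using o2 p1 q1 q2 by fastforce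
  define E1 where "E1 = (\<Sum>j<N. (ab1 j - ab2 j)^2)"
  define E2 where "E2 = (\<Sum>j<2*N. (s1 j - s2 j)^2)"
  have g: "gfun N zeta ab = (gfun N zeta ab1 + gfun N zeta ab2) / 2 - (1 / real N) * E1 / 4"
    unfolding gfun_def ab_def E1_def sq_mid_sum using N1 by (simp add: field_simps)
  have h: "hfun N s = (hfun N s1 + hfun N s2) / 2 - E2 / 4"
    using sq_mid_sum[of s1 s2 "\<lambda>_. 0" "{..<2*N}"] unfolding hfun_def s_def E2_def by simp
  have E1p: "E1 \<ge> 0" "E2 \<ge> 0" unfolding E1_def E2_def by (simp_all add: sum_nonneg)
  have Np: "0 < 1 / real N" using N1 by simp
  have "\<kappa> * ((1 / real N) * E1 / 4) + (1 - \<kappa>) * (E2 / 4) \<le> 0"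
  proof -
    have "\<kappa> * gfun N zeta ab + (1 - \<kappa>) * hfun N s =
      ((\<kappa> * gfun N zeta ab1 + (1 - \<kappa>) * hfun N s1) + (\<kappa> * gfun N zeta ab2 + (1 - \<kappa>) * hfun N s2)) / 2
      - (\<kappa> * ((1 / real N) * E1 / 4) + (1 - \<kappa>) * (E2 / 4))"
      unfolding g h using N1 by (simp add: field_simps)
    then show ?thesis using le le12 le21 by (rule aux_lin)
  qed
  moreover have "0 \<le> \<kappa> * ((1 / real N) * E1 / 4)" "0 \<le> (1 - \<kappa>) * (E2 / 4)"
    using E1p Np k0 k1 by simp_all
  ultimately have "\<kappa> * ((1 / real N) * E1 / 4) = 0" "(1 - \<kappa>) * (E2 / 4) = 0" by linarith+
  then have "E1 = 0" "E2 = 0" using k0 k1 Np by auto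
  then have "\<forall>j\<in>{..<N}. (ab1 j - ab2 j)^2 = 0" "\<forall>j\<in>{..<2*N}. (s1 j - s2 j)^2 = 0"
    unfolding E1_def E2_def by (simp_all add: sum_nonneg_eq_0_iff)
  then have "gfun N zeta ab1 = gfun N zeta ab2" "hfun N s1 = hfun N s2"
    by (auto intro!: gfun_cong hfun_cong)
  then show ?thesis using q1 q2 by simp
qed

theorem corollary2:
  fixes II N :: nat and T \<kappa> :: real
    and \<alpha> \<beta> \<gamma> C ul uh x0 :: "nat \<Rightarrow> real"
    and w :: "nat \<Rightarrow> nat \<Rightarrow> real"
    and zeta cup clo :: "nat \<Rightarrow> real"
  assumes "II \<ge> 1" and "N \<ge> 2" and "T > 0"
    and "\<forall>i\<in>{1..II}. 0 < \<alpha> i \<and> \<alpha> i \<le> 1 \<and> 0 < \<beta> i \<and> \<beta> i \<le> 1 \<and> 0 < \<gamma> i \<and> \<gamma> i \<le> 1"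
    and "\<forall>i\<in>{1..II}. C i \<ge> 0 \<and> ul i < 0 \<and> 0 < uh i \<and> 0 \<le> x0 i \<and> x0 i \<le> C i"
    and "0 \<le> \<kappa>" and "\<kappa> \<le> 1"
  shows "(\<exists>p \<in> Sfeas II N T \<alpha> \<beta> \<gamma> C ul uh x0 w zeta cup clo.
            \<forall>q \<in> Sfeas II N T \<alpha> \<beta> \<gamma> C ul uh x0 w zeta cup clo.
              \<kappa> * fst p + (1 - \<kappa>) * snd p \<le> \<kappa> * fst q + (1 - \<kappa>) * snd q)
       \<and> (0 < \<kappa> \<and> \<kappa> < 1 \<longrightarrow>
            (\<exists>!p. p \<in> Sfeas II N T \<alpha> \<beta> \<gamma> C ul uh x0 w zeta cup clo \<and>
              (\<forall>q \<in> Sfeas II N T \<alpha> \<beta> \<gamma> C ul uh x0 w zeta cup clo.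
                 \<kappa> * fst p + (1 - \<kappa>) * snd p \<le> \<kappa> * fst q + (1 - \<kappa>) * snd q)))"
proof -
  have ex: "\<exists>p \<in> Sfeas II N T \<alpha> \<beta> \<gamma> C ul uh x0 w zeta cup clo.
            \<forall>q \<in> Sfeas II N T \<alpha> \<beta> \<gamma> C ul uh x0 w zeta cup clo.
              \<kappa> * fst p + (1 - \<kappa>) * snd p \<le> \<kappa> * fst q + (1 - \<kappa>) * snd q"
    by (rule existence) (use assms in auto)
  moreover have "0 < \<kappa> \<and> \<kappa> < 1 \<longrightarrow>
            (\<exists>!p. p \<in> Sfeas II N T \<alpha> \<beta> \<gamma> C ul uh x0 w zeta cup clo \<and>
              (\<forall>q \<in> Sfeas II N T \<alpha> \<beta> \<gamma> C ul uh x0 w zeta cup clo.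
                 \<kappa> * fst p + (1 - \<kappa>) * snd p \<le> \<kappa> * fst q + (1 - \<kappa>) * snd q))"
  proof
    assume k: "0 < \<kappa> \<and> \<kappa> < 1"
    have N1: "N \<ge> 1" using assms(2) by simp
    from ex show "\<exists>!p. p \<in> Sfeas II N T \<alpha> \<beta> \<gamma> C ul uh x0 w zeta cup clo \<and>
              (\<forall>q \<in> Sfeas II N T \<alpha> \<beta> \<gamma> C ul uh x0 w zeta cup clo.
                 \<kappa> * fst p + (1 - \<kappa>) * snd p \<le> \<kappa> * fst q + (1 - \<kappa>) * snd q)"
      using uniqueness[OF N1] k by blast
  qed
  ultimately show ?thesis by blast
qed

end
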